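(* For all integers $n$ and $d$ with $3\leq d<\left\lceil\frac{n}{2}\right\rceil$, $$t(n,d)\geq n-d-3+\left\lceil\frac{n-1}{d}\right\rceil.$$
   Context: All graphs are finite, simple and undirected. In an edge-colored graph (adjacent edges may receive the same color), a path is a rainbow path if no two of its edges have the same color. A graph $G$ is $d$-rainbow connected if there is an edge-coloring of $G$ using $d$ colors such that every two distinct vertices of $G$ are joined by a rainbow path. For positive integers $n$ and $d$, $t(n,d)$ denotes the minimum number of edges of a $d$-rainbow connected graph on $n$ vertices. *)

theory Defs
  imports Complex_Main
begin

definition simple_graph :: "'a set \<Rightarrow> 'a set set \<Rightarrow> bool" where
  "simple_graph V E \<longleftrightarrow> finite V \<and> (\<forall>e\<in>E. e \<subseteq> V \<and> card e = 2)"

definition path_edges :: "'a list \<Rightarrow> 'a set list" where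
  "path_edges p = map (\<lambda>(x, y). {x, y}) (zip p (tl p))"

definition is_path :: "'a set set \<Rightarrow> 'a list \<Rightarrow> 'a \<Rightarrow> 'a \<Rightarrow> bool" where
  "is_path E p u v \<longleftrightarrow> p \<noteq> [] \<and> hd p = u \<and> last p = v \<and> distinct p
      \<and> set (path_edges p) \<subseteq> E"

definition rainbow_path :: "'a set set \<Rightarrow> ('a set \<Rightarrow> 'c) \<Rightarrow> 'a list \<Rightarrow> 'a \<Rightarrow> 'a \<Rightarrow> bool" where
  "rainbow_path E c p u v \<longleftrightarrow> is_path E p u v \<and> distinct (map c (path_edges p))"

definition rainbow_connected :: "nat \<Rightarrow> 'a set \<Rightarrow> 'a set set \<Rightarrow> bool" where
  "rainbow_connected d V E \<longleftrightarrow>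
     (\<exists>c :: 'a set \<Rightarrow> nat. (\<forall>e\<in>E. c e < d) \<and>
        (\<forall>u\<in>V. \<forall>v\<in>V. u \<noteq> v \<longrightarrow> (\<exists>p. rainbow_path E c p u v)))"

(* t(n,d): minimum number of edges of a d-rainbow connected graph on n vertices
   (vertex set {0..<n}, which is w.l.o.g. up to isomorphism) *)
definition t :: "nat \<Rightarrow> nat \<Rightarrow> nat" where
  "t n d = (LEAST m. \<exists>E. simple_graph {0..<n} E \<and> rainbow_connected d {0..<n::nat} E \<and> card E = m)"

end

theory Submission imports Defs begin

definition Rel :: "'a set set \<Rightarrow> ('a \<times> 'a) set" where
  "Rel F = {(x,y). {x,y} \<in> F}"

lemma Rel_sym: "(a,b) \<in> (Rel F)\<^sup>* \<Longrightarrow> (b,a) \<in> (Rel F)\<^sup>*"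
proof -
  have "sym (Rel F)" unfolding sym_def Rel_def by (auto simp: insert_commute)
  hence "sym ((Rel F)\<^sup>*)" by (rule sym_rtrancl)
  thus "(a,b) \<in> (Rel F)\<^sup>* \<Longrightarrow> (b,a) \<in> (Rel F)\<^sup>*" by (auto dest: symD)
qed

lemma pe_simps[simp]: "path_edges [] = []" "path_edges [a] = []"
  "path_edges (a # b # r) = {a,b} # path_edges (b # r)"
  by (simp_all add: path_edges_def)

lemma L1: "set (path_edges p) \<subseteq> F \<Longrightarrow> p \<noteq> [] \<Longrightarrow> (hd p, last p) \<in> (Rel F)\<^sup>*"
proof (induction p rule: induct_list012)
  case (3 x y zs)
  hence "(y, last (y#zs)) \<in> (Rel F)\<^sup>*" by auto
  moreover have "(x,y) \<in> Rel F" using 3 by (auto simp: Rel_def)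
  ultimately show ?case by (simp add: converse_rtrancl_into_rtrancl)
qed auto

lemma L2:
  assumes "set (path_edges p) \<subseteq> E" "distinct (map c (path_edges p))" "p \<noteq> []"
  shows "(hd p, last p) \<in> (Rel {e\<in>E. c e \<noteq> j})\<^sup>* \<or>
    (\<exists>x y. {x,y} \<in> E \<and> c {x,y} = j \<and> (hd p, x) \<in> (Rel {e\<in>E. c e \<noteq> j})\<^sup>*
       \<and> (y, last p) \<in> (Rel {e\<in>E. c e \<noteq> j})\<^sup>*)"
  using assms
proof (induction p rule: induct_list012)
  case (3 a b zs)
  let ?R = "(Rel {e\<in>E. c e \<noteq> j})\<^sup>*"
  show ?case
  proof (cases "c {a,b} = j")
    case True
    have "set (path_edges (b#zs)) \<subseteq> {e\<in>E. c e \<noteq> j}"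
      using 3(3,4) True by (auto simp: image_iff)
    from L1[OF this] have bl: "(b, last (b#zs)) \<in> ?R" by simp
    show ?thesis
    proof (rule disjI2, intro exI conjI)
      show "{a,b} \<in> E" using 3(3) by simp
      show "c {a,b} = j" using True .
      show "(hd (a#b#zs), a) \<in> ?R" by simp
      show "(b, last (a#b#zs)) \<in> ?R" using bl by simp
    qed
  next
    case False
    have ab: "(a,b) \<in> Rel {e\<in>E. c e \<noteq> j}" using 3(3) False by (auto simp: Rel_def)
    have "set (path_edges (b#zs)) \<subseteq> E" "distinct (map c (path_edges (b#zs)))" "b#zs \<noteq> []"
      using 3(3,4) by auto
    from 3(2)[OF this] have "(b, last (b#zs)) \<in> ?R \<or> (\<exists>x y. {x,y} \<in> E \<and> c {x,y} = j \<and> (b, x) \<in> ?R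
       \<and> (y, last (b#zs)) \<in> ?R)" by (simp only: list.sel(1))
    thus ?thesis
    proof
      assume "(b, last (b#zs)) \<in> ?R"
      from converse_rtrancl_into_rtrancl[OF ab this] have "(a, last (b#zs)) \<in> ?R" .
      thus ?thesis by (intro disjI1) simp
    next
      assume "\<exists>x y. {x,y} \<in> E \<and> c {x,y} = j \<and> (b, x) \<in> ?R \<and> (y, last (b#zs)) \<in> ?R"
      then obtain x y where xy: "{x,y} \<in> E" "c {x,y} = j" "(b, x) \<in> ?R" "(y, last (b#zs)) \<in> ?R" by blast
      from converse_rtrancl_into_rtrancl[OF ab xy(3)] have ax: "(a, x) \<in> ?R" .
      show ?thesis
      proof (rule disjI2, intro exI conjI)
        show "{x,y} \<in> E" by (rule xy(1))
        show "c {x,y} = j" by (rule xy(2))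
        show "(hd (a#b#zs), x) \<in> ?R" using ax by simp
        show "(y, last (a#b#zs)) \<in> ?R" using xy(4) by simp
      qed
    qed
  qed
next
  case (2 x)
  show ?case by (intro disjI1) simp
qed simp

lemma split_rt:
  assumes "(a,b) \<in> (R \<union> {(x,y),(y,x)})\<^sup>*"
  shows "(a,b)\<in>R\<^sup>* \<or> ((a,x)\<in>R\<^sup>* \<and> (y,b)\<in>R\<^sup>*) \<or> ((a,y)\<in>R\<^sup>* \<and> (x,b)\<in>R\<^sup>*)"
  using assms
proof (induction rule: rtrancl_induct)
  case base
  show ?case by simp
next
  case (step b c)
  from step.hyps(2) consider "(b,c) \<in> R" | "b = x" "c = y" | "b = y" "c = x" by blast
  thus ?case
  proof cases
    case 1
    from step.IH show ?thesis
    proof (elim disjE conjE)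
      assume "(a,b) \<in> R\<^sup>*" thus ?thesis using 1 by (simp add: rtrancl_into_rtrancl)
    next
      assume "(a,x) \<in> R\<^sup>*" "(y,b) \<in> R\<^sup>*" thus ?thesis using 1 by (simp add: rtrancl_into_rtrancl)
    next
      assume "(a,y) \<in> R\<^sup>*" "(x,b) \<in> R\<^sup>*" thus ?thesis using 1 by (simp add: rtrancl_into_rtrancl)
    qed
  next
    case 2
    from step.IH show ?thesis
    proof (elim disjE conjE)
      assume "(a,b) \<in> R\<^sup>*" thus ?thesis using 2 by simp
    next
      assume "(a,x) \<in> R\<^sup>*" "(y,b) \<in> R\<^sup>*" thus ?thesis using 2 by simp
    next
      assume "(a,y) \<in> R\<^sup>*" "(x,b) \<in> R\<^sup>*" thus ?thesis using 2 by simp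
    qed
  next
    case 3
    from step.IH show ?thesis
    proof (elim disjE conjE)
      assume "(a,b) \<in> R\<^sup>*" thus ?thesis using 3 by simp
    next
      assume "(a,x) \<in> R\<^sup>*" "(y,b) \<in> R\<^sup>*" thus ?thesis using 3 by simp
    next
      assume "(a,y) \<in> R\<^sup>*" "(x,b) \<in> R\<^sup>*" thus ?thesis using 3 by simp
    qed
  qed
qed

lemma Rel_insert: "Rel (insert {x,y} F) = Rel F \<union> {(x,y),(y,x)}"
proof (rule set_eqI)
  fix p :: "'a \<times> 'a"
  obtain a b where p: "p = (a,b)" by (cases p)
  have "{a,b} = {x,y} \<longleftrightarrow> (a = x \<and> b = y) \<or> (a = y \<and> b = x)" by (rule doubleton_eq_iff)
  thus "p \<in> Rel (insert {x,y} F) \<longleftrightarrow> p \<in> Rel F \<union> {(x,y),(y,x)}"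
    unfolding p Rel_def by auto
qed
lemma Rel_insert2: "\<not> (\<exists>x y. e = {x,y}) \<Longrightarrow> Rel (insert e F) = Rel F"
  unfolding Rel_def by auto

lemma exS:
  assumes "finite F" "finite V"
  shows "\<exists>S\<subseteq>V. card V \<le> card S + card F \<and> (\<forall>s\<in>S. \<forall>s'\<in>S. s \<noteq> s' \<longrightarrow> (s,s') \<notin> (Rel F)\<^sup>*)"
  using assms(1)
proof (induction F rule: finite_induct)
  case empty
  have "Rel {} = ({} :: ('a \<times> 'a) set)" by (simp add: Rel_def)
  thus ?case by (intro exI[of _ V]) simp
next
  case (insert e F)
  then obtain S where S: "S \<subseteq> V" "card V \<le> card S + card F"
    "\<forall>s\<in>S. \<forall>s'\<in>S. s \<noteq> s' \<longrightarrow> (s,s') \<notin> (Rel F)\<^sup>*" by blast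
  have cF: "card (insert e F) = card F + 1" using insert by simp
  show ?case
  proof (cases "\<exists>x y. e = {x,y}")
    case False
    have "card V \<le> card S + card (insert e F)" using S(2) cF by linarith
    thus ?thesis unfolding Rel_insert2[OF False] using S(1,3) by blast
  next
    case True
    then obtain x y where e: "e = {x,y}" by blast
    let ?R = "Rel F"
    have RR: "Rel (insert e F) = ?R \<union> {(x,y),(y,x)}" using e Rel_insert by simp
    show ?thesis
    proof (cases "\<exists>s1\<in>S. \<exists>s2\<in>S. (s1,x) \<in> ?R\<^sup>* \<and> (s2,y) \<in> ?R\<^sup>*")
      case True
      then obtain s1 s2 where s: "s1 \<in> S" "s2 \<in> S" "(s1,x) \<in> ?R\<^sup>*" "(s2,y) \<in> ?R\<^sup>*" by blast
      have fS: "finite S" using S(1) assms(2) finite_subset by blast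
      have "card S > 0" using fS s(1) card_gt_0_iff by blast
      hence c1: "card (S - {s1}) + 1 = card S" using s(1) fS by (simp add: card_Diff_singleton)
      have "\<forall>s\<in>S - {s1}. \<forall>s'\<in>S - {s1}. s \<noteq> s' \<longrightarrow> (s,s') \<notin> (Rel (insert e F))\<^sup>*"
      proof (intro ballI impI notI)
        fix s s' assume a: "s \<in> S - {s1}" "s' \<in> S - {s1}" "s \<noteq> s'" "(s,s') \<in> (Rel (insert e F))\<^sup>*"
        hence "(s,s')\<in>?R\<^sup>* \<or> ((s,x)\<in>?R\<^sup>* \<and> (y,s')\<in>?R\<^sup>*) \<or> ((s,y)\<in>?R\<^sup>* \<and> (x,s')\<in>?R\<^sup>*)"
          using split_rt[of s s' ?R x y] a(4) RR by simp
        thus False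
        proof (elim disjE conjE)
          assume "(s,s')\<in>?R\<^sup>*" thus False using S(3) a by blast
        next
          assume "(s,x)\<in>?R\<^sup>*" 
          hence "(s,s1) \<in> ?R\<^sup>*" using rtrancl_trans[OF _ Rel_sym[OF s(3)]] by blast
          thus False using S(3) a s(1) by blast
        next
          assume "(x,s')\<in>?R\<^sup>*"
          from rtrancl_trans[OF s(3) this] have "(s1,s') \<in> ?R\<^sup>*" .
          moreover have "s1 \<noteq> s'" "s' \<in> S" using a(2) by auto
          ultimately show False using S(3) s(1) by blast
        qed
      qed
      moreover have "S - {s1} \<subseteq> V" using S(1) by blast
      moreover have "card V \<le> card (S - {s1}) + card (insert e F)" using S(2) c1 cF by linarith
      ultimately show ?thesis by blast
    next
      case False
      have "\<forall>s\<in>S. \<forall>s'\<in>S. s \<noteq> s' \<longrightarrow> (s,s') \<notin> (Rel (insert e F))\<^sup>*"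
      proof (intro ballI impI notI)
        fix s s' assume a: "s \<in> S" "s' \<in> S" "s \<noteq> s'" "(s,s') \<in> (Rel (insert e F))\<^sup>*"
        hence "(s,s')\<in>?R\<^sup>* \<or> ((s,x)\<in>?R\<^sup>* \<and> (y,s')\<in>?R\<^sup>*) \<or> ((s,y)\<in>?R\<^sup>* \<and> (x,s')\<in>?R\<^sup>*)"
          using split_rt[of s s' ?R x y] a(4) RR by simp
        thus False
        proof (elim disjE conjE)
          assume "(s,s')\<in>?R\<^sup>*" thus False using S(3) a by blast
        next
          assume "(s,x)\<in>?R\<^sup>*" "(y,s')\<in>?R\<^sup>*"
          thus False using False a(1,2) Rel_sym[OF \<open>(y,s')\<in>?R\<^sup>*\<close>] by blast
        next
          assume "(s,y)\<in>?R\<^sup>*" "(x,s')\<in>?R\<^sup>*"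
          thus False using False a(1,2) Rel_sym[OF \<open>(x,s')\<in>?R\<^sup>*\<close>] by blast
        qed
      qed
      moreover have "card V \<le> card S + card (insert e F)" using S(2) cF by linarith
      ultimately show ?thesis using S(1) by blast
    qed
  qed
qed


lemma two_choose: "2 * (p choose 2) = p * (p - 1)"
proof -
  have "even (p * (p - 1))" by auto
  thus ?thesis unfolding choose_two by (rule dvd_mult_div_cancel)
qed

lemma pairs_bound:
  assumes rb: "\<forall>u\<in>V. \<forall>v\<in>V. u \<noteq> v \<longrightarrow> (\<exists>p. rainbow_path E c p u v)"
  and SV: "S \<subseteq> V" and fS: "finite S" and fE: "finite E"
  and indep: "\<forall>s\<in>S. \<forall>s'\<in>S. s \<noteq> s' \<longrightarrow> (s,s') \<notin> (Rel {e\<in>E. c e \<noteq> j})\<^sup>*"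
  shows "card S choose 2 \<le> card {e\<in>E. c e = j}"
proof -
  let ?R = "(Rel {e\<in>E. c e \<noteq> j})\<^sup>*"
  define g where "g e = {t\<in>S. \<exists>z\<in>e. (t,z) \<in> ?R}" for e
  have sub: "{P. P \<subseteq> S \<and> card P = 2} \<subseteq> g ` {e\<in>E. c e = j}"
  proof
    fix P assume "P \<in> {P. P \<subseteq> S \<and> card P = 2}"
    hence PS: "P \<subseteq> S" and "card P = 2" by auto
    then obtain s s' where P: "P = {s,s'}" "s \<noteq> s'" by (auto simp: card_2_iff)
    have ss: "s \<in> S" "s' \<in> S" using PS P by auto
    then obtain p where "rainbow_path E c p s s'" using rb SV P(2) by blast
    hence pp: "set (path_edges p) \<subseteq> E" "distinct (map c (path_edges p))" "p \<noteq> []"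
      "hd p = s" "last p = s'"
      by (auto simp: rainbow_path_def is_path_def)
    from L2[OF pp(1-3), of j] pp(4,5)
    have "(s,s') \<in> ?R \<or> (\<exists>x y. {x,y} \<in> E \<and> c {x,y} = j \<and> (s, x) \<in> ?R \<and> (y, s') \<in> ?R)"
      by simp
    moreover have "(s,s') \<notin> ?R" using indep ss P(2) by blast
    ultimately obtain x y where xy: "{x,y} \<in> E" "c {x,y} = j" "(s, x) \<in> ?R" "(y, s') \<in> ?R"
      by blast
    have "g {x,y} = {s,s'}"
    proof
      show "g {x,y} \<subseteq> {s,s'}"
      proof
        fix t assume "t \<in> g {x,y}"
        hence t: "t \<in> S" "(t,x) \<in> ?R \<or> (t,y) \<in> ?R" unfolding g_def by auto
        from t(2) show "t \<in> {s,s'}"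
        proof
          assume "(t,x) \<in> ?R"
          from rtrancl_trans[OF this Rel_sym[OF xy(3)]] have "(t,s) \<in> ?R" .
          hence "t = s" using indep t(1) ss(1) by blast
          thus ?thesis by simp
        next
          assume "(t,y) \<in> ?R"
          from rtrancl_trans[OF this xy(4)] have "(t,s') \<in> ?R" .
          hence "t = s'" using indep t(1) ss(2) by blast
          thus ?thesis by simp
        qed
      qed
    next
      have "(s',y) \<in> ?R" using Rel_sym[OF xy(4)] .
      thus "{s,s'} \<subseteq> g {x,y}" using xy(3) ss unfolding g_def by blast
    qed
    thus "P \<in> g ` {e\<in>E. c e = j}" using xy(1,2) P(1) by force
  qed
  have "card S choose 2 = card {P. P \<subseteq> S \<and> card P = 2}" using n_subsets[OF fS, of 2] by simp
  also have "\<dots> \<le> card (g ` {e\<in>E. c e = j})"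
    by (rule card_mono[OF finite_imageI sub]) (use fE in simp)
  also have "\<dots> \<le> card {e\<in>E. c e = j}" by (rule card_image_le) (use fE in simp)
  finally show ?thesis .
qed

lemma arith1:
  fixes p a K d :: int
  assumes "p \<ge> 0" "d \<ge> 3" "p*(p-1) \<le> 2*a" "a \<le> K - 1 + p"
  shows "d*p \<le> K + d^2 + 3*d"
proof (cases "p \<le> d + 3")
  case True
  have "(p-1)*(p-2) \<ge> 0"
  proof (cases "p \<le> 1")
    case True thus ?thesis using assms(1) by (smt (verit) mult_nonneg_nonneg mult_nonpos_nonpos)
  next
    case False thus ?thesis by simp
  qed
  hence "K \<ge> 0" using assms by (simp add: algebra_simps)
  moreover have "d*p \<le> d*(d+3)" using True assms(2) by (simp add: mult_left_mono)
  ultimately show ?thesis by (simp add: power2_eq_square algebra_simps)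
next
  case False
  have "(p-d)*(p-d-3) \<ge> 0" using False by simp
  hence h: "p*p - 2*d*p + d*d - 3*p + 3*d \<ge> 0" by (simp add: algebra_simps)
  have "d*d \<ge> 0" by simp
  moreover have "p*(p-1) = p*p - p" by (simp add: algebra_simps)
  moreover have "2*d*p = 2*(d*p)" by simp
  ultimately show ?thesis using assms h unfolding power2_eq_square by linarith
qed


lemma exists_graph:
  assumes "d > 0"
  shows "\<exists>E. simple_graph {0..<n} E \<and> rainbow_connected d {0..<n::nat} E \<and> card E = card E"
proof -
  let ?V = "{0..<n}"
  define E0 where "E0 = {{u,v} | u v. u \<in> ?V \<and> v \<in> ?V \<and> u \<noteq> v}"
  have "simple_graph ?V E0" unfolding simple_graph_def E0_def by auto
  moreover have "rainbow_connected d ?V E0"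
    unfolding rainbow_connected_def
  proof (intro exI[of _ "\<lambda>_. 0"] conjI ballI impI)
    fix e assume "e \<in> E0" show "(0::nat) < d" using assms .
  next
    fix u v assume uv: "u \<in> ?V" "v \<in> ?V" "u \<noteq> v"
    have "rainbow_path E0 (\<lambda>_. 0) [u,v] u v"
      unfolding rainbow_path_def is_path_def using uv by (auto simp: E0_def)
    thus "\<exists>p. rainbow_path E0 (\<lambda>_. 0) p u v" by blast
  qed
  ultimately show ?thesis by blast
qed

lemma main_bound:
  fixes n d :: nat and E :: "nat set set"
  assumes d3: "3 \<le> d" and sg: "simple_graph {0..<n} E" and rc: "rainbow_connected d {0..<n} E"
  shows "int n - 1 \<le> int d * (int (card E) - int n + 1) + int d ^ 2 + 2 * int d"
proof -
  let ?V = "{0..<n}"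
  obtain c :: "nat set \<Rightarrow> nat" where cd: "\<forall>e\<in>E. c e < d"
    and rb: "\<forall>u\<in>?V. \<forall>v\<in>?V. u \<noteq> v \<longrightarrow> (\<exists>p. rainbow_path E c p u v)"
    using rc unfolding rainbow_connected_def by blast
  have fE: "finite E"
  proof (rule finite_subset)
    show "E \<subseteq> Pow ?V" using sg unfolding simple_graph_def by auto
  qed simp
  define Q where "Q j S \<longleftrightarrow> S \<subseteq> ?V \<and> card ?V \<le> card S + card {e\<in>E. c e \<noteq> j}
     \<and> (\<forall>s\<in>S. \<forall>s'\<in>S. s \<noteq> s' \<longrightarrow> (s,s') \<notin> (Rel {e\<in>E. c e \<noteq> j})\<^sup>*)" for j S
  define Sf where "Sf j = (SOME S. Q j S)" for j
  have QS: "Q j (Sf j)" for j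
  proof -
    have "\<exists>S. Q j S" unfolding Q_def using exS[of "{e\<in>E. c e \<noteq> j}" ?V] fE by auto
    thus ?thesis unfolding Sf_def by (rule someI_ex)
  qed
  define K where "K = int (card E) - int n + 1"
  define a where "a j = card {e\<in>E. c e = j}" for j
  define p where "p j = card (Sf j)" for j
  have per: "int (a j) \<le> K - 1 + int (p j) \<and> int d * int (p j) \<le> K + int d ^ 2 + 3 * int d" for j
  proof -
    have Q: "Sf j \<subseteq> ?V" "card ?V \<le> card (Sf j) + card {e\<in>E. c e \<noteq> j}"
      "\<forall>s\<in>Sf j. \<forall>s'\<in>Sf j. s \<noteq> s' \<longrightarrow> (s,s') \<notin> (Rel {e\<in>E. c e \<noteq> j})\<^sup>*"
      using QS[of j] unfolding Q_def by auto
    have fS: "finite (Sf j)" using Q(1) finite_subset by blast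
    have "E = {e\<in>E. c e = j} \<union> {e\<in>E. c e \<noteq> j}" by auto
    hence cE: "card E = a j + card {e\<in>E. c e \<noteq> j}"
      unfolding a_def using fE by (metis (no_types, lifting) card_Un_disjoint disjoint_iff
        finite_Un mem_Collect_eq)
    have pb: "p j choose 2 \<le> a j" unfolding p_def a_def
      by (rule pairs_bound[OF rb Q(1) fS fE Q(3)])
    have "2 * (p j choose 2) = p j * (p j - 1)" by (rule two_choose)
    hence nb: "p j * (p j - 1) \<le> 2 * a j" using pb by linarith
    have "int (p j) * (int (p j) - 1) = int (p j * (p j - 1))" by (cases "p j") (auto simp: algebra_simps)
    hence "int (p j) * (int (p j) - 1) \<le> 2 * int (a j)" using nb by linarith
    moreover have "int (a j) \<le> K - 1 + int (p j)" using Q(2) cE unfolding K_def p_def by simp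
    ultimately show ?thesis using arith1[of "int (p j)" "int d" "int (a j)" K] d3 by simp
  qed
  have "card E = card (\<Union>j\<in>{..<d}. {e\<in>E. c e = j})" using cd by (intro arg_cong[where f=card]) auto
  also have "\<dots> = (\<Sum>j<d. a j)" unfolding a_def
    by (rule card_UN_disjoint) (use fE in auto)
  finally have sumE: "int (card E) = (\<Sum>j<d. int (a j))" by simp
  have s1: "(\<Sum>j<d. int (a j)) \<le> (\<Sum>j<d. K - 1 + int (p j))" by (rule sum_mono) (use per in blast)
  have s2: "(\<Sum>j<d. int d * int (p j)) \<le> (\<Sum>j<(d::nat). K + int d ^ 2 + 3 * int d)"
    by (rule sum_mono) (use per in blast)
  define P where "P = (\<Sum>j<d. int (p j))"
  have A1: "int (card E) \<le> int d * (K - 1) + P" using sumE s1 unfolding P_def by (simp add: sum.distrib)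
  have A2: "int d * P \<le> int d * (K + int d ^ 2 + 3 * int d)" using s2 unfolding P_def
    by (simp add: sum_distrib_left)
  have "int d * (int (card E)) \<le> int d * (int d * (K - 1)) + int d * P"
    using A1 mult_left_mono[OF A1, of "int d"] by (simp add: algebra_simps)
  hence "int d * (int (card E)) \<le> int d * (int d * (K - 1) + (K + int d ^ 2 + 3 * int d))"
    using A2 by (simp add: algebra_simps)
  hence "int (card E) \<le> int d * (K - 1) + (K + int d ^ 2 + 3 * int d)"
    using d3 by (simp add: mult_le_cancel_left)
  thus ?thesis unfolding K_def by (simp add: algebra_simps power2_eq_square)
qed

theorem proposition2:
  fixes n d :: nat
  assumes "3 \<le> d" and "int d < ceiling (real n / 2)"
  shows "int (t n d) \<ge> int n - int d - 3 + ceiling ((real n - 1) / real d)"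
proof -
  let ?P = "\<lambda>m. \<exists>E. simple_graph {0..<n} E \<and> rainbow_connected d {0..<n::nat} E \<and> card E = m"
  have "\<exists>m. ?P m" using exists_graph[of d n] assms(1) by auto
  hence "?P (LEAST m. ?P m)" by (rule LeastI_ex)
  hence "?P (t n d)" unfolding t_def .
  then obtain E where E: "simple_graph {0..<n} E" "rainbow_connected d {0..<n} E" "card E = t n d"
    by blast
  define K where "K = int (card E) - int n + 1"
  have mb: "int n - 1 \<le> int d * K + int d ^ 2 + 2 * int d"
    using main_bound[OF assms(1) E(1,2)] unfolding K_def .
  have dpos: "real d > 0" using assms(1) by simp
  have "(real n - 1) / real d \<le> real_of_int (K + int d + 2)"
  proof -
    have "real n - 1 \<le> real d * real_of_int (K + int d + 2)"
    proof -
      have "real_of_int (int n - 1) \<le> real_of_int (int d * K + int d ^ 2 + 2 * int d)"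
        using mb by linarith
      thus ?thesis by (simp add: algebra_simps power2_eq_square)
    qed
    thus ?thesis using dpos by (simp add: divide_le_eq mult.commute)
  qed
  hence "ceiling ((real n - 1) / real d) \<le> K + int d + 2" by (simp add: ceiling_le_iff)
  thus ?thesis using E(3) unfolding K_def by linarith
qed

end
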